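(* Let $k$ be a positive integer and $I=\{1,3,5,\ldots,2k+1\}$ (so that $s(I)=k$), with Naruse-Newton coefficients $(C_0,C_1,\ldots,C_k)$. Then $C_0=C_1>C_2>\cdots>C_k$.
   Context: Partitions are drawn as Young diagrams $\mathbb{D}(\lambda)$ in English notation; $c_{i,j}$ is the cell in row $i$, column $j$. The hook length $h_\lambda(c)$ is the number of cells of $\mathbb{D}(\lambda)$ weakly right of $c$ in its row or weakly below $c$ in its column (counting $c$ once). For $\mu\subseteq\lambda$, an excited diagram of $\lambda/\mu$ is a subset of $\mathbb{D}(\lambda)$ obtained from $\mathbb{D}(\mu)$ by repeatedly replacing a cell $c_{i,j}\in D$ by $c_{i+1,j+1}$, allowed iff $c_{i+1,j+1}\in\mathbb{D}(\lambda)$ and none of $c_{i,j+1},c_{i+1,j},c_{i+1,j+1}$ lies in $D$; $\mathbb{E}(\lambda/\mu)$ is their set. A ribbon with $n$ cells is read from its lower-left to its upper-right cell, each successive cell directly right of or directly above the previous; it corresponds to the set of $i\in\{1,\ldots,n-1\}$ with cell $i$ directly below cell $i+1$. A descent set is a non-empty finite set $I$ of positive integers; $\lambda^I$ is the unique partition with $\lambda^I_1=\lambda^I_2$ such that the cells $c_{i,j}\in\mathbb{D}(\lambda^I)$ with fewer than three of $c_{i,j+1},c_{i+1,j},c_{i+1,j+1}$ in $\mathbb{D}(\lambda^I)$ form a ribbon corresponding to $I$; this ribbon is $\mathbb{D}(\lambda^I)\setminus\mathbb{D}(\mu^I)$ for a partition $\mu^I$. Let $s(I)=\lambda^I_1-1$.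 Naruse-Newton coefficients: every excited diagram of $\lambda^I/\mu^I$ meets row 1 in $\{c_{1,1},\ldots,c_{1,r}\}$, $0\le r\le s$; for $0\le j\le s(I)$, $C_j(I)=\sum_D\prod_{c\in D,\,c\notin\text{row }1}h_{\lambda^I}(c)$, summed over $D\in\mathbb{E}(\lambda^I/\mu^I)$ with exactly $s-j$ cells in row 1. (For $I=\{1,3,5\}$: $\lambda^I=(3,3,2,1)$ and $(C_0,C_1,C_2)=(6,6,3)$.) *)

theory Defs
  imports Main
begin

(* Cells are pairs (row, column), 1-indexed, English notation:
   row index grows downwards, column index grows to the right. *)
type_synonym cell = "nat \<times> nat"

definition is_partition :: "nat list \<Rightarrow> bool" where
  "is_partition lam \<longleftrightarrow> sorted_wrt (\<ge>) lam \<and> 0 \<notin> set lam"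

definition part :: "nat list \<Rightarrow> nat \<Rightarrow> nat" where
  "part lam i = (if 1 \<le> i \<and> i \<le> length lam then lam ! (i - 1) else 0)"

definition diagram :: "nat list \<Rightarrow> cell set" where
  "diagram lam = {(i, j). 1 \<le> i \<and> i \<le> length lam \<and> 1 \<le> j \<and> j \<le> part lam i}"

definition hook :: "nat list \<Rightarrow> cell \<Rightarrow> nat" where
  "hook lam c = card {(i', j') \<in> diagram lam.
      (i' = fst c \<and> j' \<ge> snd c) \<or> (j' = snd c \<and> i' \<ge> fst c)}"

inductive_set excited :: "nat list \<Rightarrow> nat list \<Rightarrow> cell set set"
  for lam mu where
  base: "diagram mu \<in> excited lam mu"
| move: "\<lbrakk> D \<in> excited lam mu; (i, j) \<in> D; (i + 1, j + 1) \<in> diagram lam;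
           (i, j + 1) \<notin> D; (i + 1, j) \<notin> D; (i + 1, j + 1) \<notin> D \<rbrakk>
         \<Longrightarrow> insert (i + 1, j + 1) (D - {(i, j)}) \<in> excited lam mu"

definition rim :: "nat list \<Rightarrow> cell set" where
  "rim lam = {(i, j) \<in> diagram lam.
     card ({(i, j + 1), (i + 1, j), (i + 1, j + 1)} \<inter> diagram lam) < 3}"

(* R is a ribbon with n = card R cells corresponding to the descent set I:
   its cells c 1, ..., c n are read from lower-left to upper-right, each
   successive cell directly right of or directly above the previous, and I is
   the set of t in {1..n-1} with cell t directly below cell t+1. *)
definition ribbon_for :: "nat set \<Rightarrow> cell set \<Rightarrow> bool" where
  "ribbon_for I R \<longleftrightarrow> (\<exists>c :: nat \<Rightarrow> cell.
     R = c ` {1..card R} \<and>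
     (\<forall>t \<in> {1..<card R}.
        c (Suc t) = (fst (c t), snd (c t) + 1) \<or>
        (fst (c t) \<ge> 1 \<and> c (Suc t) = (fst (c t) - 1, snd (c t)))) \<and>
     I = {t \<in> {1..<card R}. c (Suc t) = (fst (c t) - 1, snd (c t))})"

definition lambdaI :: "nat set \<Rightarrow> nat list" where
  "lambdaI I = (THE lam. is_partition lam \<and> part lam 1 = part lam 2 \<and>
                         ribbon_for I (rim lam))"

definition muI :: "nat set \<Rightarrow> nat list" where
  "muI I = (THE mu. is_partition mu \<and>
                    diagram mu = diagram (lambdaI I) - rim (lambdaI I))"

definition sI :: "nat set \<Rightarrow> nat" where
  "sI I = part (lambdaI I) 1 - 1"

definition NN_coeff :: "nat set \<Rightarrow> nat \<Rightarrow> nat" where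
  "NN_coeff I j = (\<Sum>D \<in> {D \<in> excited (lambdaI I) (muI I).
                           card {c \<in> D. fst c = 1} = sI I - j}.
                     \<Prod>c \<in> {c \<in> D. fst c \<noteq> 1}. hook (lambdaI I) c)"

end

theory Submission
  imports Defs Complex_Main
begin

fun ok :: "nat \<Rightarrow> bool list \<Rightarrow> bool" where
  "ok h [] = True"
| "ok h (b # s) = (if b then ok (Suc h) s else (0 < h \<and> ok (h - 1) s))"

fun fin :: "nat \<Rightarrow> bool list \<Rightarrow> nat" where
  "fin h [] = h"
| "fin h (b # s) = fin (if b then Suc h else h - 1) s"

fun wp :: "nat \<Rightarrow> bool list \<Rightarrow> nat" where
  "wp h [] = 2 * h + 1"
| "wp h (b # s) = (2 * h + 1) * wp (if b then Suc h else h - 1) s"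

lemma ok_append: "ok h (a @ b) = (ok h a \<and> ok (fin h a) b)"
  by (induction a arbitrary: h) auto

lemma fin_append: "fin h (a @ b) = fin (fin h a) b"
  by (induction a arbitrary: h) auto

lemma wp_snoc: "wp h (a @ [b]) = wp h a * (2 * fin h (a @ [b]) + 1)"
proof (induction a arbitrary: h)
  case (Cons c a)
  show ?case by (simp only: wp.simps append_Cons fin.simps Cons.IH mult.assoc)
qed simp

lemma wp_pos: "wp h s > 0"
  by (induction s arbitrary: h) auto

definition Wset :: "nat \<Rightarrow> nat \<Rightarrow> bool list set" where
  "Wset L x = {w. length w = L \<and> ok 0 w \<and> fin 0 w = x}"

definition V :: "nat \<Rightarrow> nat \<Rightarrow> real" where
  "V L x = (\<Sum>w\<in>Wset L x. 1 / real (wp 0 w))"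

lemma finite_Wset: "finite (Wset L x)"
proof -
  have "Wset L x \<subseteq> {w. set w \<subseteq> UNIV \<and> length w = L}" unfolding Wset_def by auto
  moreover have "finite {w. set w \<subseteq> (UNIV::bool set) \<and> length w = L}"
    by (rule finite_lists_length_eq) simp
  ultimately show ?thesis by (rule finite_subset)
qed

lemma Wset_0: "Wset 0 x = (if x = 0 then {[]} else {})"
  unfolding Wset_def by auto

lemma V_0: "V 0 x = (if x = 0 then 1 else 0)"
  unfolding V_def Wset_0 by simp

lemma V_nonneg: "V L x \<ge> 0"
  unfolding V_def by (intro sum_nonneg) simp

lemma Wset_Suc_0: "Wset (Suc L) 0 = (\<lambda>w. w @ [False]) ` Wset L 1"
proof (intro set_eqI iffI)
  fix w assume "w \<in> Wset (Suc L) 0"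
  then have w: "length w = Suc L" "ok 0 w" "fin 0 w = 0" unfolding Wset_def by auto
  then obtain u b where u: "w = u @ [b]" by (metis length_Suc_conv_rev)
  show "w \<in> (\<lambda>w. w @ [False]) ` Wset L 1"
  proof (cases b)
    case True
    then show ?thesis using w u by (simp add: fin_append)
  next
    case False
    then have "fin 0 u = 1" using w u by (auto simp: fin_append ok_append)
    then show ?thesis using w u False by (auto simp: Wset_def ok_append)
  qed
next
  fix w assume "w \<in> (\<lambda>w. w @ [False]) ` Wset L 1"
  then show "w \<in> Wset (Suc L) 0" by (auto simp: Wset_def ok_append fin_append)
qed

lemma Wset_Suc_Suc: "Wset (Suc L) (Suc x) =
   (\<lambda>w. w @ [True]) ` Wset L x \<union> (\<lambda>w. w @ [False]) ` Wset L (Suc (Suc x))"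
proof (intro set_eqI iffI)
  fix w assume "w \<in> Wset (Suc L) (Suc x)"
  then have w: "length w = Suc L" "ok 0 w" "fin 0 w = Suc x" unfolding Wset_def by auto
  then obtain u b where u: "w = u @ [b]" by (metis length_Suc_conv_rev)
  show "w \<in> (\<lambda>w. w @ [True]) ` Wset L x \<union> (\<lambda>w. w @ [False]) ` Wset L (Suc (Suc x))"
  proof (cases b)
    case True
    then have "u \<in> Wset L x" using w u by (auto simp: fin_append ok_append Wset_def)
    then show ?thesis using u True by auto
  next
    case False
    then have "u \<in> Wset L (Suc (Suc x))" using w u by (auto simp: fin_append ok_append Wset_def)
    then show ?thesis using u False by auto
  qed
next
  fix w assume "w \<in> (\<lambda>w. w @ [True]) ` Wset L x \<union> (\<lambda>w. w @ [False]) ` Wset L (Suc (Suc x))"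
  then show "w \<in> Wset (Suc L) (Suc x)" by (auto simp: Wset_def ok_append fin_append)
qed

lemma V_Suc_0: "V (Suc L) 0 = V L 1"
proof -
  have "V (Suc L) 0 = (\<Sum>w\<in>Wset L 1. 1 / real (wp 0 (w @ [False])))"
    unfolding V_def Wset_Suc_0 by (subst sum.reindex) (auto simp: inj_on_def)
  also have "\<dots> = V L 1"
    unfolding V_def by (intro sum.cong refl) (auto simp: wp_snoc fin_append Wset_def algebra_simps)
  finally show ?thesis .
qed

lemma V_Suc_Suc: "V (Suc L) (Suc x) = (V L x + V L (Suc (Suc x))) / (2 * real x + 3)"
proof -
  have d: "(\<lambda>w. w @ [True]) ` Wset L x \<inter> (\<lambda>w. w @ [False]) ` Wset L (Suc (Suc x)) = {}" by auto
  have "V (Suc L) (Suc x) = (\<Sum>w\<in>Wset L x. 1 / real (wp 0 (w @ [True])))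
        + (\<Sum>w\<in>Wset L (Suc (Suc x)). 1 / real (wp 0 (w @ [False])))"
    unfolding V_def Wset_Suc_Suc
    by (subst sum.union_disjoint) (auto simp: finite_Wset d sum.reindex inj_on_def)
  also have "(\<Sum>w\<in>Wset L x. 1 / real (wp 0 (w @ [True]))) = V L x / (2 * real x + 3)"
    unfolding V_def sum_divide_distrib
    by (intro sum.cong refl) (auto simp: wp_snoc fin_append Wset_def algebra_simps)
  also have "(\<Sum>w\<in>Wset L (Suc (Suc x)). 1 / real (wp 0 (w @ [False]))) = V L (Suc (Suc x)) / (2 * real x + 3)"
    unfolding V_def sum_divide_distrib
    by (intro sum.cong refl) (auto simp: wp_snoc fin_append Wset_def algebra_simps)
  finally show ?thesis by (simp add: add_divide_distrib)
qed

lemma coef: fixes r :: real assumes "r \<ge> 0"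
  shows "(2*r+5)*(2*r+8)*(2*r+3) \<le> (2*r+4)*(2*r+7)^2"
proof -
  have "(2*r+4)*(2*r+7)^2 - (2*r+5)*(2*r+8)*(2*r+3) = 8*r^2 + 52*r + 76"
    by (simp add: algebra_simps power2_eq_square)
  moreover have "8*r^2 + 52*r + 76 \<ge> 0" using assms by (simp add: add_nonneg_nonneg)
  ultimately show ?thesis by linarith
qed
lemma aux: fixes A B C r :: real assumes "r \<ge> 0" "B \<ge> 0" "C \<ge> 0" "A \<ge> (2*r+3)*B" "B \<ge> (2*r+7)*C"
  shows "(2*r+5)*((B+C)/(2*r+7)) \<le> (A+B)/(2*r+3)"
proof -
  have p: "2*r+7 > 0" "2*r+3 > 0" using assms by auto
  have "C \<le> B/(2*r+7)" using assms p by (simp add: field_simps)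
  then have "(2*r+5)*((B+C)/(2*r+7)) \<le> (2*r+5)*((B+B/(2*r+7))/(2*r+7))"
    using assms p by (intro mult_left_mono divide_right_mono) auto
  also have "\<dots> = B * ((2*r+5)*(2*r+8)/(2*r+7)^2)"
    using p by (simp add: field_simps power2_eq_square)
  also have "\<dots> \<le> B * ((2*r+4)/(2*r+3))"
  proof (intro mult_left_mono)
    show "(2*r+5)*(2*r+8)/(2*r+7)^2 \<le> (2*r+4)/(2*r+3)"
      using coef[OF assms(1)] p by (simp add: divide_simps)
  qed (use assms in auto)
  also have "\<dots> = (B*(2*r+4))/(2*r+3)" by simp
  also have "\<dots> \<le> (A+B)/(2*r+3)"
  proof (intro divide_right_mono)
    show "B*(2*r+4) \<le> A+B" using assms(4) by (simp add: algebra_simps)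
  qed (use p in auto)
  finally show ?thesis .
qed

lemma V_ineq: "1 \<le> x \<Longrightarrow> V L (x - 1) \<ge> (2 * real x + 1) * V L (x + 1)"
proof (induction L arbitrary: x)
  case 0
  then show ?case by (simp add: V_0)
next
  case (Suc L)
  show ?case
  proof (cases "x = 1")
    case True
    have IH: "V L 1 \<ge> 5 * V L 3" using Suc.IH[of 2] by simp
    have "V (Suc L) 2 = (V L 1 + V L 3) / 5"
      using V_Suc_Suc[of L 1] by (simp add: numeral_eq_Suc)
    then have "5 * V (Suc L) 2 = V L 1 + V L 3" by simp
    moreover have "V (Suc L) 0 = V L 1" by (rule V_Suc_0)
    ultimately have "3 * V (Suc L) 2 \<le> V (Suc L) 0" using IH V_nonneg[of L 3] by linarith
    moreover have x1: "x + 1 = 2" "x - 1 = 0" "real x = 1" using True by auto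
    ultimately show ?thesis unfolding x1 by simp
  next
    case False
    then obtain y where y: "x = Suc (Suc y)" using Suc.prems
      by (metis One_nat_def Suc_le_D le_SucE not0_implies_Suc le_zero_eq)
    have IH1: "V L y \<ge> (2 * real y + 3) * V L (y + 2)"
      using Suc.IH[of "Suc y"] by (simp add: algebra_simps)
    have IH2: "V L (y + 2) \<ge> (2 * real y + 7) * V L (y + 4)"
      using Suc.IH[of "Suc (Suc (Suc y))"] by (simp add: algebra_simps numeral_eq_Suc)
    have e1: "V (Suc L) (x - 1) = (V L y + V L (y + 2)) / (2 * real y + 3)"
      using V_Suc_Suc[of L y] y by simp
    have e2: "V (Suc L) (x + 1) = (V L (y + 2) + V L (y + 4)) / (2 * real y + 7)"
      using V_Suc_Suc[of L "Suc (Suc y)"] y by (simp add: numeral_eq_Suc algebra_simps)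
    have "(2 * real y + 5) * ((V L (y + 2) + V L (y + 4)) / (2 * real y + 7))
          \<le> (V L y + V L (y + 2)) / (2 * real y + 3)"
      by (rule aux) (use IH1 IH2 V_nonneg in auto)
    then show ?thesis using e1 e2 y by (simp add: algebra_simps)
  qed
qed

lemma V_pos: "x \<le> L \<Longrightarrow> even (L - x) \<Longrightarrow> V L x > 0"
proof (induction L arbitrary: x)
  case 0
  then show ?case by (simp add: V_0)
next
  case (Suc L)
  show ?case
  proof (cases x)
    case 0
    have "L \<noteq> 0"
    proof
      assume "L = 0" then show False using Suc.prems 0 by simp
    qed
    then have "1 \<le> L" "even (L - 1)" using Suc.prems 0 by auto
    then show ?thesis using Suc.IH[of 1] 0 V_Suc_0 by simp
  next
    case (Suc y)
    then have "V L y > 0" using Suc.IH[of y] Suc.prems by auto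
    then have "(V L y + V L (Suc (Suc y))) / (2 * real y + 3) > 0"
      using V_nonneg[of L "Suc (Suc y)"] by (intro divide_pos_pos) auto
    then show ?thesis using Suc V_Suc_Suc by simp
  qed
qed

lemma V_step_gt: "1 \<le> x \<Longrightarrow> x + 1 \<le> L \<Longrightarrow> even (L - x - 1) \<Longrightarrow> V (Suc L) x > V L (x + 1)"
proof -
  assume a: "1 \<le> x" "x + 1 \<le> L" "even (L - x - 1)"
  obtain y where y: "x = Suc y" using a by (cases x) auto
  have pos: "V L (x + 1) > 0" using a by (intro V_pos) auto
  have "V L y \<ge> (2 * real x + 1) * V L (x + 1)" using V_ineq[of x L] a y by simp
  moreover have "V (Suc L) x = (V L y + V L (x + 1)) / (2 * real x + 1)"
    using V_Suc_Suc[of L y] y by (simp add: algebra_simps)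
  moreover have "((2 * real x + 2) * V L (x + 1)) / (2 * real x + 1) \<le> (V L y + V L (x + 1)) / (2 * real x + 1)"
    using calculation(1) by (intro divide_right_mono) (auto simp: algebra_simps)
  ultimately have "V (Suc L) x \<ge> ((2 * real x + 2) * V L (x + 1)) / (2 * real x + 1)"
    by simp
  moreover have "((2 * real x + 2) * V L (x + 1)) / (2 * real x + 1) > V L (x + 1)"
    using pos by (simp add: field_simps)
  ultimately show ?thesis by linarith
qed


definition lamK :: "nat \<Rightarrow> nat list" where
  "lamK k = map (\<lambda>i. if i = 0 then k + 1 else k + 2 - i) [0..<k+2]"

definition muK :: "nat \<Rightarrow> nat list" where
  "muK k = map (\<lambda>i. k - i) [0..<k]"

definition Dl :: "nat \<Rightarrow> cell set" where
  "Dl k = {(i, j). 1 \<le> i \<and> 1 \<le> j \<and> (i + j \<le> k + 2 \<or> (2 \<le> i \<and> i + j = k + 3))}"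

definition Dm :: "nat \<Rightarrow> cell set" where
  "Dm k = {(i, j). 1 \<le> i \<and> 1 \<le> j \<and> i + j \<le> k + 1}"

lemma mem_diagram: "(i, j) \<in> diagram lam \<longleftrightarrow> 1 \<le> i \<and> 1 \<le> j \<and> j \<le> part lam i"
  unfolding diagram_def part_def by auto

lemma length_lamK[simp]: "length (lamK k) = k + 2"
  unfolding lamK_def by simp

lemma lamK_nth: "m < k + 2 \<Longrightarrow> lamK k ! m = (if m = 0 then k + 1 else k + 2 - m)"
  unfolding lamK_def by (simp del: upt_Suc)

lemma part_lamK: "part (lamK k) i = (if i = 0 \<or> i > k + 2 then 0 else if i = 1 then k + 1 else k + 3 - i)"
  unfolding part_def by (auto simp: lamK_nth)

lemma part_muK: "part (muK k) i = (if i = 0 \<or> i > k then 0 else k + 1 - i)"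
  unfolding part_def muK_def by auto

lemma diagram_lamK: "diagram (lamK k) = Dl k"
  unfolding Dl_def by (auto simp: mem_diagram part_lamK split: if_splits)

lemma diagram_muK: "diagram (muK k) = Dm k"
  unfolding Dm_def by (auto simp: mem_diagram part_muK split: if_splits)

lemma is_partition_lamK: "is_partition (lamK k)"
proof -
  have "sorted_wrt (\<ge>) (lamK k)"
    by (auto simp: sorted_wrt_iff_nth_less lamK_nth)
  moreover have "0 \<notin> set (lamK k)"
    by (auto simp: in_set_conv_nth lamK_nth)
  ultimately show ?thesis unfolding is_partition_def by simp
qed

lemma is_partition_muK: "is_partition (muK k)"
  unfolding is_partition_def muK_def
  by (auto simp: sorted_wrt_map sorted_wrt_iff_nth_less)

lemma part_mono:
  assumes "is_partition lam" "1 \<le> i" "i \<le> i'"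
  shows "part lam i' \<le> part lam i"
proof (cases "i' \<le> length lam")
  case True
  then have "lam ! (i' - 1) \<le> lam ! (i - 1) \<or> i = i'"
    using assms unfolding is_partition_def
    by (metis (no_types, lifting) diff_less_mono le_neq_implies_less less_le_trans sorted_wrt_iff_nth_less
        less_one not_less_eq_eq Suc_le_eq diff_Suc_1 Suc_pred)
  then show ?thesis using True assms unfolding part_def by auto
next
  case False
  then show ?thesis unfolding part_def by auto
qed

lemma part_pos:
  assumes "is_partition lam" "1 \<le> i" "i \<le> length lam"
  shows "part lam i \<ge> 1"
proof -
  have "lam ! (i - 1) \<in> set lam" using assms by auto
  then have "lam ! (i - 1) \<noteq> 0" using assms unfolding is_partition_def by metis
  then show ?thesis using assms unfolding part_def by auto
qed

lemma part_zero: "i > length lam \<Longrightarrow> part lam i = 0"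
  unfolding part_def by auto

lemma rim_partition:
  assumes "is_partition lam"
  shows "rim lam = {(i, j). (i, j) \<in> diagram lam \<and> (i + 1, j + 1) \<notin> diagram lam}"
proof -
  have "card ({(i, j + 1), (i + 1, j), (i + 1, j + 1)} \<inter> diagram lam) < 3 \<longleftrightarrow> (i + 1, j + 1) \<notin> diagram lam"
    if "(i, j) \<in> diagram lam" for i j
  proof
    assume a: "card ({(i, j + 1), (i + 1, j), (i + 1, j + 1)} \<inter> diagram lam) < 3"
    show "(i + 1, j + 1) \<notin> diagram lam"
    proof
      assume b: "(i + 1, j + 1) \<in> diagram lam"
      have "part lam (i + 1) \<le> part lam i" using part_mono[OF assms, of i "i+1"] that by (auto simp: mem_diagram)
      then have "(i, j + 1) \<in> diagram lam" "(i + 1, j) \<in> diagram lam" using b that by (auto simp: mem_diagram)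
      then have "{(i, j + 1), (i + 1, j), (i + 1, j + 1)} \<inter> diagram lam = {(i, j + 1), (i + 1, j), (i + 1, j + 1)}"
        using b by auto
      then show False using a by simp
    qed
  next
    assume a: "(i + 1, j + 1) \<notin> diagram lam"
    have "{(i, j + 1), (i + 1, j), (i + 1, j + 1)} \<inter> diagram lam \<subseteq> {(i, j + 1), (i + 1, j)}"
      using a by auto
    then have "card ({(i, j + 1), (i + 1, j), (i + 1, j + 1)} \<inter> diagram lam) \<le> card {(i, j + 1), (i + 1, j)}"
      by (intro card_mono) auto
    also have "\<dots> \<le> 2" by (simp add: card_insert_if)
    finally show "card ({(i, j + 1), (i + 1, j), (i + 1, j + 1)} \<inter> diagram lam) < 3" by simp
  qed
  then show ?thesis unfolding rim_def by auto
qed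

lemma rim_lamK: "rim (lamK k) = Dl k - Dm k"
  unfolding rim_partition[OF is_partition_lamK] diagram_lamK Dl_def Dm_def by auto

lemma diagram_inj:
  assumes "is_partition a" "is_partition b" "diagram a = diagram b"
  shows "a = b"
proof -
  have len: "(i, 1) \<in> diagram lam \<longleftrightarrow> 1 \<le> i \<and> i \<le> length lam" if "is_partition lam" for lam i
  proof
    assume "(i, 1) \<in> diagram lam"
    then have "1 \<le> i" "part lam i \<ge> 1" by (auto simp: mem_diagram)
    moreover have "i \<le> length lam"
    proof (rule ccontr)
      assume "\<not> i \<le> length lam"
      then show False using part_zero[of lam i] \<open>part lam i \<ge> 1\<close> by simp
    qed
    ultimately show "1 \<le> i \<and> i \<le> length lam" by simp
  next
    assume "1 \<le> i \<and> i \<le> length lam"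
    then show "(i, 1) \<in> diagram lam" using part_pos[OF that, of i] by (auto simp: mem_diagram)
  qed
  have "length a = length b"
  proof (rule ccontr)
    assume "length a \<noteq> length b"
    then consider "length a < length b" | "length b < length a" by linarith
    then show False
    proof cases
      case 1
      then have "(length b, 1) \<in> diagram b" using len[OF assms(2)] by auto
      then show False using 1 len[OF assms(1), of "length b"] assms(3) by auto
    next
      case 2
      then have "(length a, 1) \<in> diagram a" using len[OF assms(1)] by auto
      then show False using 2 len[OF assms(2), of "length a"] assms(3) by auto
    qed
  qed
  moreover have "part a i = part b i" if "1 \<le> i" "i \<le> length a" for i
  proof -
    have pa: "part a i \<ge> 1" using part_pos[OF assms(1) that] .
    have pb: "part b i \<ge> 1" using part_pos[OF assms(2)] that \<open>length a = length b\<close> by auto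
    have "(i, part a i) \<in> diagram a" using pa that by (simp add: mem_diagram)
    then have "(i, part a i) \<in> diagram b" using assms(3) by simp
    then have 1: "part a i \<le> part b i" by (simp add: mem_diagram)
    have "(i, part b i) \<in> diagram b" using pb that by (simp add: mem_diagram)
    then have "(i, part b i) \<in> diagram a" using assms(3) by simp
    then have 2: "part b i \<le> part a i" by (simp add: mem_diagram)
    show ?thesis using 1 2 by simp
  qed
  ultimately show ?thesis
  proof (intro nth_equalityI)
    fix m assume "m < length a"
    then have "part a (m + 1) = part b (m + 1)" using \<open>\<And>i. 1 \<le> i \<Longrightarrow> i \<le> length a \<Longrightarrow> part a i = part b i\<close> by auto
    then show "a ! m = b ! m" using \<open>m < length a\<close> \<open>length a = length b\<close> unfolding part_def by auto
  qed
qed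

lemma muI_eq:
  assumes "lambdaI I = lamK k"
  shows "muI I = muK k"
proof -
  have e: "diagram (lamK k) - rim (lamK k) = Dm k"
    by (auto simp: diagram_lamK rim_lamK Dl_def Dm_def)
  show ?thesis
  unfolding muI_def assms e
  proof (rule the_equality)
    show "is_partition (muK k) \<and> diagram (muK k) = Dm k"
      using is_partition_muK diagram_muK by auto
  next
    fix mu assume "is_partition mu \<and> diagram mu = Dm k"
    then show "mu = muK k"
      using diagram_inj[of mu "muK k"] is_partition_muK diagram_muK by auto
  qed
qed


fun stp :: "bool \<Rightarrow> cell \<Rightarrow> cell" where
  "stp b (i, j) = (if b then (i - 1, j) else (i, j + 1))"

fun pc :: "cell \<Rightarrow> bool list \<Rightarrow> cell set" where
  "pc p [] = {p}"
| "pc p (b # s) = insert p (pc (stp b p) s)"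

fun endp :: "cell \<Rightarrow> bool list \<Rightarrow> cell" where
  "endp p [] = p"
| "endp p (b # s) = endp (stp b p) s"

abbreviation nT :: "bool list \<Rightarrow> nat" where "nT s \<equiv> length (filter (\<lambda>x. x) s)"
abbreviation nF :: "bool list \<Rightarrow> nat" where "nF s \<equiv> length (filter Not s)"

lemma nT_nF: "nT s + nF s = length s"
  by (induction s) auto

lemma start_in_pc: "p \<in> pc p s"
  by (cases s) auto

lemma pc_append: "pc p (a @ b) = pc p a \<union> pc (endp p a) b"
  by (induction a arbitrary: p) (auto simp: start_in_pc)

lemma endp_append: "endp p (a @ b) = endp (endp p a) b"
  by (induction a arbitrary: p) auto

lemma endp_in_pc: "endp p s \<in> pc p s"
  by (induction s arbitrary: p) auto

lemma pc_bound: "c \<in> pc p s \<Longrightarrow> fst c \<le> fst p \<and> snd p \<le> snd c"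
proof (induction s arbitrary: p)
  case (Cons b s)
  obtain i j where p: "p = (i, j)" by (cases p)
  show ?case using Cons p by (cases b) fastforce+
qed simp

lemma pc_bound_end: "c \<in> pc p s \<Longrightarrow> fst (endp p s) \<le> fst c \<and> snd c \<le> snd (endp p s)"
proof (induction s arbitrary: p)
  case (Cons b s)
  obtain i j where p: "p = (i, j)" by (cases p)
  have "fst (endp (stp b p) s) \<le> fst (stp b p) \<and> snd (stp b p) \<le> snd (endp (stp b p) s)"
    using pc_bound[OF endp_in_pc] .
  then show ?case using Cons p by (cases b) auto
qed simp

lemma endp_formula: "nT s \<le> fst p \<Longrightarrow> endp p s = (fst p - nT s, snd p + nF s)"
proof (induction s arbitrary: p)
  case (Cons b s)
  obtain i j where p: "p = (i, j)" by (cases p)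
  show ?case using Cons p by (cases b) auto
qed simp

lemma pc_split: "c \<in> pc p s \<Longrightarrow> \<exists>a b. s = a @ b \<and> endp p a = c"
proof (induction s arbitrary: p)
  case Nil
  then show ?case by (intro exI[of _ "[]"]) auto
next
  case (Cons x s)
  show ?case
  proof (cases "c = p")
    case True
    show ?thesis by (rule exI[of _ "[]"], rule exI[of _ "x # s"]) (simp add: True)
  next
    case False
    then have "c \<in> pc (stp x p) s" using Cons.prems by auto
    then obtain a b where "s = a @ b" "endp (stp x p) a = c" using Cons.IH by blast
    then show ?thesis by (intro exI[of _ "x # a"] exI[of _ b]) auto
  qed
qed

lemma pc_replicate_F: "pc (i, j) (replicate n False) = {(i, j + t) | t. t \<le> n}"
proof (induction n arbitrary: j)
  case 0
  then show ?case by auto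
next
  case (Suc n)
  have "pc (i, j) (replicate (Suc n) False) = insert (i, j) {(i, j + 1 + t) | t. t \<le> n}"
    using Suc by simp
  also have "\<dots> = {(i, j + t) | t. t \<le> Suc n}"
  proof (intro set_eqI iffI)
    fix c assume "c \<in> {(i, j + t) | t. t \<le> Suc n}"
    then obtain t where t: "c = (i, j + t)" "t \<le> Suc n" by auto
    show "c \<in> insert (i, j) {(i, j + 1 + t) | t. t \<le> n}"
    proof (cases t)
      case 0 then show ?thesis using t by auto
    next
      case (Suc t') then show ?thesis using t by auto
    qed
  qed auto
  finally show ?case .
qed

lemma insert_cancel: "insert p A = insert p B \<Longrightarrow> p \<notin> A \<Longrightarrow> p \<notin> B \<Longrightarrow> A = B"
proof -
  assume that: "insert p A = insert p B" "p \<notin> A" "p \<notin> B"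
  have "A = insert p A - {p}" using that(2) by simp
  also have "\<dots> = insert p B - {p}" using that(1) by simp
  also have "\<dots> = B" using that(3) by simp
  finally show ?thesis .
qed

lemma pc_inj:
  "pc p s = pc p s' \<Longrightarrow> length s = length s' \<Longrightarrow> nT s < fst p \<Longrightarrow> nT s' < fst p \<Longrightarrow> s = s'"
proof (induction s arbitrary: p s')
  case Nil
  then show ?case by simp
next
  case (Cons b s)
  obtain b' t where s': "s' = b' # t" using Cons.prems(2) by (cases s') auto
  obtain i j where p: "p = (i, j)" by (cases p)
  have notin: "p \<notin> pc (stp x p) u" for x u
  proof
    assume "p \<in> pc (stp x p) u"
    then have "fst p \<le> fst (stp x p) \<and> snd (stp x p) \<le> snd p" using pc_bound by blast
    then show False using p Cons.prems(3) by (cases x) auto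
  qed
  have "b = b'"
  proof (rule ccontr)
    assume ne: "b \<noteq> b'"
    have i1: "i \<ge> 1" using Cons.prems(3) p by simp
    show False
    proof (cases b)
      case True
      have m: "(i - 1, j) \<in> insert (i, j) (pc (i - 1, j) s)" using start_in_pc[of "(i - 1, j)" s] by simp
      have eq: "insert (i, j) (pc (i - 1, j) s) = insert (i, j) (pc (i, j + 1) t)"
        using Cons.prems(1) s' ne True p by simp
      have "(i - 1, j) \<in> insert (i, j) (pc (i, j + 1) t)" using m unfolding eq .
      then show False using i1 pc_bound[of "(i - 1, j)" "(i, j + 1)" t] by auto
    next
      case False
      have m: "(i - 1, j) \<in> insert (i, j) (pc (i - 1, j) t)" using start_in_pc[of "(i - 1, j)" t] by simp
      have eq: "insert (i, j) (pc (i - 1, j) t) = insert (i, j) (pc (i, j + 1) s)"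
        using Cons.prems(1) s' ne False p by simp
      have "(i - 1, j) \<in> insert (i, j) (pc (i, j + 1) s)" using m unfolding eq .
      then show False using i1 pc_bound[of "(i - 1, j)" "(i, j + 1)" s] by auto
    qed
  qed
  have "pc (stp b p) s = pc (stp b p) t"
    by (rule insert_cancel[OF _ notin notin]) (use Cons.prems(1) s' \<open>b = b'\<close> in simp)
  moreover have "nT s < fst (stp b p) \<and> nT t < fst (stp b p)"
  proof (cases b)
    case True
    then show ?thesis using Cons.prems(3,4) s' p \<open>b = b'\<close> by (simp; linarith)
  next
    case False
    then show ?thesis using Cons.prems(3,4) s' p \<open>b = b'\<close> by simp
  qed
  ultimately have "s = t" using Cons.IH[of "stp b p" t] Cons.prems(2) s' by auto
  then show ?case using s' \<open>b = b'\<close> by simp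
qed


definition st :: "nat \<Rightarrow> cell" where "st k = (k + 2, 1)"

definition valid :: "nat \<Rightarrow> bool list \<Rightarrow> bool" where
  "valid k s \<longleftrightarrow> length s = 2 * k + 1 \<and> nT s = k + 1 \<and> ok 0 s"

definition Dp :: "nat \<Rightarrow> bool list \<Rightarrow> cell set" where
  "Dp k s = Dl k - pc (st k) s"

definition s0 :: "nat \<Rightarrow> bool list" where
  "s0 k = concat (replicate k [True, False]) @ [True]"

lemma pc_in_Dl:
  "ok h s \<Longrightarrow> a + b + h = k + 3 \<Longrightarrow> 1 \<le> b \<Longrightarrow> 1 + nT s \<le> a \<Longrightarrow> b + nF s \<le> k + 1 \<Longrightarrow> pc (a, b) s \<subseteq> Dl k"
proof (induction s arbitrary: a b h)
  case Nil
  then show ?case by (auto simp: Dl_def)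
next
  case (Cons x s)
  have here: "(a, b) \<in> Dl k" using Cons.prems by (cases x) (auto simp: Dl_def)
  show ?case
  proof (cases x)
    case True
    then have "pc (a - 1, b) s \<subseteq> Dl k" using Cons.prems by (intro Cons.IH[of "Suc h"]) auto
    then show ?thesis using here True by simp
  next
    case False
    then have "pc (a, b + 1) s \<subseteq> Dl k" using Cons.prems by (intro Cons.IH[of "h - 1"]) auto
    then show ?thesis using here False by simp
  qed
qed

lemma valid_nF: "valid k s \<Longrightarrow> nF s = k"
  using nT_nF[of s] unfolding valid_def by simp

lemma valid_pc_Dl: "valid k s \<Longrightarrow> pc (st k) s \<subseteq> Dl k"
  unfolding st_def using valid_nF[of k s] by (intro pc_in_Dl[of 0]) (auto simp: valid_def)

lemma valid_endp: "valid k s \<Longrightarrow> endp (st k) s = (1, k + 1)"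
  using valid_nF[of k s] by (subst endp_formula) (auto simp: valid_def st_def)

lemma len_cr: "length (concat (replicate m [True, False])) = 2 * m"
  by (induction m) auto

lemma nT_cr: "nT (concat (replicate m [True, False])) = m"
  by (induction m) auto

lemma ok_cr: "ok h (concat (replicate m [True, False]) @ r) = ok h r"
  by (induction m) auto

lemma valid_s0: "valid k (s0 k)"
  unfolding valid_def s0_def by (simp add: len_cr nT_cr ok_cr)

lemma pc_cr:
  "m + 1 \<le> a \<Longrightarrow> (x, y) \<in> pc (a, b) (concat (replicate m [True, False]) @ [True]) \<longleftrightarrow>
     b \<le> y \<and> y \<le> b + m \<and> (x + y = a + b \<or> x + y + 1 = a + b)"
proof (induction m arbitrary: a b)
  case 0
  then show ?case by auto
next
  case (Suc m)
  have "pc (a, b) (concat (replicate (Suc m) [True, False]) @ [True]) =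
        {(a, b), (a - 1, b)} \<union> pc (a - 1, b + 1) (concat (replicate m [True, False]) @ [True])"
    by auto
  then show ?case using Suc.IH[of "a - 1" "b + 1"] Suc.prems by auto
qed

lemma Dp_s0: "Dp k (s0 k) = Dm k"
proof -
  have "pc (st k) (s0 k) = {(x, y). 1 \<le> y \<and> y \<le> k + 1 \<and> (x + y = k + 3 \<or> x + y = k + 2)}"
    unfolding st_def s0_def using pc_cr[of k "k + 2"] by auto
  then show ?thesis unfolding Dp_def Dl_def Dm_def by auto
qed

lemma swap_pc:
  assumes "endp p a = (r, j)" "1 \<le> r"
  shows "pc p (a @ True # False # b) = insert (r - 1, j) (pc p (a @ False # True # b) - {(r, j + 1)})"
    and "(r - 1, j) \<notin> pc p (a @ False # True # b)"
    and "(r, j + 1) \<in> pc p (a @ False # True # b)"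
    and "(r - 1, j + 1) \<in> pc p (a @ False # True # b)"
    and "(r, j) \<in> pc p (a @ False # True # b)"
    and "(r - 1, j) \<in> pc p (a @ True # False # b)"
    and "(r, j + 1) \<notin> pc p (a @ True # False # b)"
proof -
  have A: "c \<in> pc p a \<Longrightarrow> r \<le> fst c \<and> snd c \<le> j" for c using pc_bound_end[of c p a] assms by simp
  have B: "c \<in> pc (r - 1, j + 1) b \<Longrightarrow> fst c \<le> r - 1 \<and> j + 1 \<le> snd c" for c using pc_bound[of c _ b] by fastforce
  have e1: "pc p (a @ True # False # b) = pc p a \<union> {(r, j), (r - 1, j)} \<union> pc (r - 1, j + 1) b"
    using assms by (auto simp: pc_append)
  have e2: "pc p (a @ False # True # b) = pc p a \<union> {(r, j), (r, j + 1)} \<union> pc (r - 1, j + 1) b"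
    using assms by (auto simp: pc_append)
  have n1: "(r - 1, j) \<notin> pc p a" "(r - 1, j) \<notin> pc (r - 1, j + 1) b" using A B assms(2) by fastforce+
  have n2: "(r, j + 1) \<notin> pc p a" "(r, j + 1) \<notin> pc (r - 1, j + 1) b" using A B assms(2) by fastforce+
  have s1: "(r - 1, j + 1) \<in> pc (r - 1, j + 1) b" by (rule start_in_pc)
  show "pc p (a @ True # False # b) = insert (r - 1, j) (pc p (a @ False # True # b) - {(r, j + 1)})"
    unfolding e1 e2 using n1 n2 assms(2) by auto
  show "(r - 1, j) \<notin> pc p (a @ False # True # b)" unfolding e2 using n1 assms(2) by auto
  show "(r, j + 1) \<in> pc p (a @ False # True # b)" unfolding e2 by auto
  show "(r - 1, j + 1) \<in> pc p (a @ False # True # b)" unfolding e2 using s1 by auto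
  show "(r, j) \<in> pc p (a @ False # True # b)" unfolding e2 by auto
  show "(r - 1, j) \<in> pc p (a @ True # False # b)" unfolding e1 by auto
  show "(r, j + 1) \<notin> pc p (a @ True # False # b)" unfolding e1 using n2 assms(2) by auto
qed

fun area :: "nat \<Rightarrow> bool list \<Rightarrow> nat" where
  "area h [] = 0"
| "area h (b # s) = (if b then Suc h else h - 1) + area (if b then Suc h else h - 1) s"

lemma area_append: "area h (a @ b) = area h a + area (fin h a) b"
  by (induction a arbitrary: h) auto

lemma ok_repF: "ok h (replicate p False @ r) \<Longrightarrow> p \<le> h"
  by (induction p arbitrary: h) fastforce+

lemma peak:
  "ok h s \<Longrightarrow> (\<exists>a b. s = a @ True # False # b \<and> 1 \<le> fin h a) \<or>
     (\<exists>p m r. s = replicate p False @ concat (replicate m [True, False]) @ replicate r True \<and> (0 < m \<longrightarrow> p = h))"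
proof (induction s arbitrary: h)
  case Nil
  then show ?case by (intro disjI2 exI[of _ 0]) auto
next
  case (Cons x s)
  show ?case
  proof (cases x)
    case False
    then have h: "0 < h" "ok (h - 1) s" using Cons.prems by auto
    from Cons.IH[OF h(2)] show ?thesis
    proof
      assume "\<exists>a b. s = a @ True # False # b \<and> 1 \<le> fin (h - 1) a"
      then obtain a b where "s = a @ True # False # b" "1 \<le> fin (h - 1) a" by blast
      then show ?thesis using False by (intro disjI1 exI[of _ "False # a"] exI[of _ b]) auto
    next
      assume "\<exists>p m r. s = replicate p False @ concat (replicate m [True, False]) @ replicate r True \<and> (0 < m \<longrightarrow> p = h - 1)"
      then obtain p m r where "s = replicate p False @ concat (replicate m [True, False]) @ replicate r True"
        "0 < m \<longrightarrow> p = h - 1" by blast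
      then show ?thesis using False h by (intro disjI2 exI[of _ "Suc p"] exI[of _ m] exI[of _ r]) auto
    qed
  next
    case True
    then have h: "ok (Suc h) s" using Cons.prems by auto
    from Cons.IH[OF h] show ?thesis
    proof
      assume "\<exists>a b. s = a @ True # False # b \<and> 1 \<le> fin (Suc h) a"
      then obtain a b where "s = a @ True # False # b" "1 \<le> fin (Suc h) a" by blast
      then show ?thesis using True by (intro disjI1 exI[of _ "True # a"] exI[of _ b]) auto
    next
      assume "\<exists>p m r. s = replicate p False @ concat (replicate m [True, False]) @ replicate r True \<and> (0 < m \<longrightarrow> p = Suc h)"
      then obtain p m r where s: "s = replicate p False @ concat (replicate m [True, False]) @ replicate r True"
        and pm: "0 < m \<longrightarrow> p = Suc h" by blast
      show ?thesis
      proof (cases p)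
        case 0
        then have "m = 0" using pm by auto
        then show ?thesis using s 0 True by (intro disjI2 exI[of _ 0] exI[of _ 0] exI[of _ "Suc r"]) auto
      next
        case (Suc p')
        show ?thesis
        proof (cases h)
          case (Suc h')
          then show ?thesis using s \<open>p = Suc p'\<close> True
            by (intro disjI1 exI[of _ "[]"] exI[of _ "replicate p' False @ concat (replicate m [True, False]) @ replicate r True"]) auto
        next
          case 0
          have "ok 0 (replicate p' False @ concat (replicate m [True, False]) @ replicate r True)"
            using h s \<open>p = Suc p'\<close> 0 by simp
          then have "p' = 0" using ok_repF by fastforce
          then show ?thesis using s \<open>p = Suc p'\<close> True 0
            by (intro disjI2 exI[of _ 0] exI[of _ "Suc m"] exI[of _ r]) auto
        qed
      qed
    qed
  qed
qed

lemma nT_repT: "nT (replicate r True) = r" by (induction r) auto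

lemma valid_peak:
  assumes "valid k s" "s \<noteq> s0 k"
  shows "\<exists>a b. s = a @ True # False # b \<and> 1 \<le> fin 0 a"
proof (rule ccontr)
  assume np: "\<not> ?thesis"
  have ok: "ok 0 s" using assms unfolding valid_def by simp
  then obtain p m r where s: "s = replicate p False @ concat (replicate m [True, False]) @ replicate r True"
    using peak[OF ok] np by blast
  have "p = 0" using ok_repF[of 0 p] ok s by simp
  then have s': "s = concat (replicate m [True, False]) @ replicate r True" using s by simp
  have "m + r = k + 1" "2 * m + r = 2 * k + 1"
    using assms(1) unfolding valid_def s' by (simp_all add: len_cr nT_cr nT_repT)
  then have "m = k" "r = 1" by auto
  then have "s = s0 k" using s' unfolding s0_def by simp
  then show False using assms(2) by simp
qed


lemma valid_swap_down:
  assumes "valid k (a @ True # False # b)" "1 \<le> fin 0 a"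
  shows "valid k (a @ False # True # b)"
  using assms unfolding valid_def by (auto simp: ok_append)

lemma valid_swap_up:
  assumes "valid k (a @ False # True # b)"
  shows "valid k (a @ True # False # b)"
  using assms unfolding valid_def by (auto simp: ok_append)

lemma endp_split:
  assumes "valid k (a @ x # b)"
  shows "endp (st k) a = (k + 2 - nT a, 1 + nF a)" "nT a \<le> k + 1"
proof -
  have "nT a \<le> k + 1" using assms unfolding valid_def by auto
  then show "endp (st k) a = (k + 2 - nT a, 1 + nF a)" using endp_formula[of a "st k"] by (simp add: st_def)
  show "nT a \<le> k + 1" by fact
qed

theorem valid_excited: "valid k s \<Longrightarrow> Dp k s \<in> excited (lamK k) (muK k)"
proof (induction "area 0 s" arbitrary: s rule: less_induct)
  case less
  show ?case
  proof (cases "s = s0 k")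
    case True
    then show ?thesis using Dp_s0 diagram_muK excited.base by metis
  next
    case False
    then obtain a b where s: "s = a @ True # False # b" and g: "1 \<le> fin 0 a"
      using valid_peak less.prems by blast
    define s' where "s' = a @ False # True # b"
    have v': "valid k s'" unfolding s'_def using valid_swap_down less.prems s g by blast
    have "area 0 s' < area 0 s" unfolding s s'_def using g by (simp add: area_append)
    then have IH: "Dp k s' \<in> excited (lamK k) (muK k)" using less.hyps v' by blast
    have "nT a \<le> k" using less.prems s unfolding valid_def by simp
    obtain r j where e: "endp (st k) a = (r, j)" "2 \<le> r"
      using endp_split[of k a True "False # b"] less.prems s \<open>nT a \<le> k\<close> by auto
    define i where "i = r - 1"
    have ri: "r = i + 1" using e(2) i_def by simp
    note sw = swap_pc[OF e(1), of b] 
    have P: "pc (st k) s = insert (i, j) (pc (st k) s' - {(i + 1, j + 1)})"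
      using sw(1) e(2) unfolding s s'_def i_def by simp
    have sub: "pc (st k) s \<subseteq> Dl k" "pc (st k) s' \<subseteq> Dl k"
      using valid_pc_Dl less.prems v' by auto
    have m1: "(i, j) \<in> Dp k s'"
      using sw(2,6) sub e(2) unfolding Dp_def s s'_def i_def by auto
    have m2: "(i + 1, j + 1) \<in> diagram (lamK k)"
      using sw(3) sub ri unfolding diagram_lamK s'_def by auto
    have m3: "(i, j + 1) \<notin> Dp k s'" "(i + 1, j) \<notin> Dp k s'" "(i + 1, j + 1) \<notin> Dp k s'"
      using sw(3,4,5) ri unfolding Dp_def s'_def i_def by auto
    have "Dp k s = insert (i + 1, j + 1) (Dp k s' - {(i, j)})"
      using P m2 sw(2) ri unfolding Dp_def diagram_lamK s'_def by auto
    then show ?thesis using excited.move[OF IH m1 m2 m3] by simp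
  qed
qed

theorem excited_valid: "D \<in> excited (lamK k) (muK k) \<Longrightarrow> \<exists>s. valid k s \<and> D = Dp k s"
proof (induction rule: excited.induct)
  case base
  then show ?case using valid_s0 Dp_s0 diagram_muK by metis
next
  case (move D i j)
  obtain s where v: "valid k s" and D: "D = Dp k s" using move.IH by blast
  have ij: "1 \<le> i" "1 \<le> j" using move.hyps(2) D unfolding Dp_def Dl_def by auto
  have sub: "pc (st k) s \<subseteq> Dl k" using valid_pc_Dl v by auto
  have inDl: "(i, j + 1) \<in> Dl k" "(i + 1, j) \<in> Dl k" "(i + 1, j + 1) \<in> Dl k"
    using move.hyps(3) ij unfolding diagram_lamK Dl_def by auto
  have onp: "(i, j + 1) \<in> pc (st k) s" "(i + 1, j) \<in> pc (st k) s" "(i + 1, j + 1) \<in> pc (st k) s"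
    using inDl move.hyps(4,5,6) D unfolding Dp_def by auto
  have offp: "(i, j) \<notin> pc (st k) s" using move.hyps(2) D unfolding Dp_def by auto
  obtain a rest where s: "s = a @ rest" and ea: "endp (st k) a = (i + 1, j)"
    using pc_split[OF onp(2)] by blast
  have pcs: "pc (st k) s = pc (st k) a \<union> pc (i + 1, j) rest" using s ea pc_append by simp
  have ends: "endp (st k) s = (1, k + 1)" using valid_endp v by simp
  have A: "c \<in> pc (st k) a \<Longrightarrow> snd c \<le> j" for c using pc_bound_end[of c "st k" a] ea by simp
  obtain b2 where rest: "rest = False # True # b2"
  proof (cases rest)
    case Nil
    then show ?thesis using ends s ea ij by (simp add: endp_append)
  next
    case (Cons x b1)
    show ?thesis
    proof (cases x)
      case True
      then have "(i, j) \<in> pc (i + 1, j) rest" using Cons start_in_pc by simp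
      then show ?thesis using offp pcs by simp
    next
      case False
      show ?thesis
      proof (cases b1)
        case Nil
        then show ?thesis using ends s ea Cons False ij by (simp add: endp_append)
      next
        case (Cons y b2)
        show ?thesis
        proof (cases y)
          case True
          then show ?thesis using that Cons \<open>rest = x # b1\<close> False by simp
        next
          case F: False
          have "pc (i + 1, j) rest = {(i + 1, j), (i + 1, j + 1)} \<union> pc (i + 1, j + 2) b2"
            using \<open>rest = x # b1\<close> Cons False F by (auto simp: numeral_eq_Suc)
          moreover have "c \<in> pc (i + 1, j + 2) b2 \<Longrightarrow> j + 2 \<le> snd c" for c using pc_bound[of c _ b2] by fastforce
          ultimately show ?thesis using onp(1) pcs A by fastforce
        qed
      qed
    qed
  qed
  define s' where "s' = a @ True # False # b2"
  have v': "valid k s'" using valid_swap_up v s rest unfolding s'_def by simp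
  note sw = swap_pc[OF ea, of b2]
  have P: "pc (st k) s' = insert (i, j) (pc (st k) s - {(i + 1, j + 1)})"
    using sw(1) unfolding s'_def s rest by simp
  have "insert (i + 1, j + 1) (D - {(i, j)}) = Dp k s'"
    using P D inDl(3) sw(2) offp unfolding Dp_def by auto
  then show ?case using v' by blast
qed


lemma hook_lamK:
  assumes "2 \<le> a" "1 \<le> b" "a + b \<le> k + 3"
  shows "hook (lamK k) (a, b) = 2 * (k + 3 - a - b) + 1"
proof -
  have S: "{(i', j') \<in> diagram (lamK k). (i' = fst (a, b) \<and> j' \<ge> snd (a, b)) \<or> (j' = snd (a, b) \<and> i' \<ge> fst (a, b))}
        = ({a} \<times> {b..k + 3 - a}) \<union> ({a + 1..k + 3 - b} \<times> {b})"
    using assms unfolding diagram_lamK Dl_def by auto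
  have "card (({a} \<times> {b..k + 3 - a}) \<union> ({a + 1..k + 3 - b} \<times> {b})) =
        card ({a} \<times> {b..k + 3 - a}) + card ({a + 1..k + 3 - b} \<times> {b})"
    by (intro card_Un_disjoint) auto
  also have "\<dots> = 2 * (k + 3 - a - b) + 1" using assms by (simp add: card_cartesian_product)
  finally show ?thesis unfolding hook_def S .
qed

lemma finite_pc: "finite (pc p s)"
  by (induction s arbitrary: p) auto

lemma finite_Dl: "finite (Dl k)"
proof -
  have "Dl k \<subseteq> {1..k + 2} \<times> {1..k + 2}" unfolding Dl_def by auto
  then show ?thesis by (rule finite_subset) auto
qed

lemma prod_pc:
  "ok h w \<Longrightarrow> a + b + h = k + 3 \<Longrightarrow> 1 \<le> b \<Longrightarrow> 2 + nT w \<le> a \<Longrightarrow>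
   (\<Prod>c\<in>pc (a, b) w. hook (lamK k) c) = wp h w"
proof (induction w arbitrary: a b h)
  case Nil
  then show ?case using hook_lamK[of a b k] by simp
next
  case (Cons x w)
  have notin: "(a, b) \<notin> pc (stp x (a, b)) w"
  proof
    assume "(a, b) \<in> pc (stp x (a, b)) w"
    then show False using pc_bound[of "(a, b)" "stp x (a, b)" w] Cons.prems by (cases x) auto
  qed
  have hk: "hook (lamK k) (a, b) = 2 * h + 1" using hook_lamK[of a b k] Cons.prems by simp
  show ?case
  proof (cases x)
    case True
    have "(\<Prod>c\<in>pc (a - 1, b) w. hook (lamK k) c) = wp (Suc h) w"
      using Cons.prems True by (intro Cons.IH) auto
    then show ?thesis using notin True hk by (simp add: finite_pc)
  next
    case False
    have "(\<Prod>c\<in>pc (a, b + 1) w. hook (lamK k) c) = wp (h - 1) w"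
      using Cons.prems False by (intro Cons.IH) auto
    then show ?thesis using notin False hk by (simp add: finite_pc)
  qed
qed

lemma split_last_True: "True \<in> set s \<Longrightarrow> \<exists>w j. s = w @ True # replicate j False"
proof (induction s)
  case Nil
  then show ?case by simp
next
  case (Cons x s)
  show ?case
  proof (cases "True \<in> set s")
    case True
    then obtain w j where "s = w @ True # replicate j False" using Cons.IH by blast
    then show ?thesis by (intro exI[of _ "x # w"] exI[of _ j]) simp
  next
    case False
    then have eq: "s = replicate (length s) False" by (induction s) auto
    have xT: "x = True" using Cons.prems False by auto
    have "x # s = [] @ True # replicate (length s) False"
      using eq xT by (metis append_Nil)
    then show ?thesis by blast
  qed
qed

lemma fin_count: "ok h w \<Longrightarrow> fin h w + nF w = h + nT w"
  by (induction w arbitrary: h) auto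

lemma ok_repF_iff: "ok h (replicate p False) \<longleftrightarrow> p \<le> h"
proof (induction p arbitrary: h)
  case (Suc p)
  then show ?case by (cases h) simp_all
qed simp

lemma nT_repF: "nT (replicate j False) = 0" by (induction j) auto

lemma valid_of_W:
  assumes "j \<le> k" "w \<in> Wset (2 * k - j) j"
  shows "valid k (w @ True # replicate j False)" "nT w = k" "nF w = k - j"
proof -
  have w: "length w = 2 * k - j" "ok 0 w" "fin 0 w = j" using assms unfolding Wset_def by auto
  have "fin 0 w + nF w = nT w" using fin_count[OF w(2)] by simp
  moreover have "nT w + nF w = 2 * k - j" using nT_nF[of w] w by simp
  ultimately show nt: "nT w = k" and nf: "nF w = k - j" using w(3) assms(1) by auto
  show "valid k (w @ True # replicate j False)"
    unfolding valid_def using w nt assms(1) by (simp add: ok_append ok_repF_iff nT_repF)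
qed

lemma W_of_valid:
  assumes "valid k (w @ True # replicate j False)"
  shows "j \<le> k" "w \<in> Wset (2 * k - j) j"
proof -
  have v: "length w + 1 + j = 2 * k + 1" "nT w = k" "ok 0 w"
    using assms unfolding valid_def by (auto simp: ok_append nT_repF)
  have "nT w + nF w = length w" by (rule nT_nF)
  then show "j \<le> k" using v by linarith
  have "fin 0 w + nF w = nT w" using fin_count[OF v(3)] by simp
  then have "fin 0 w = j" using v \<open>nT w + nF w = length w\<close> by linarith
  then show "w \<in> Wset (2 * k - j) j" unfolding Wset_def using v by auto
qed

definition Phi :: "nat \<Rightarrow> nat \<Rightarrow> bool list \<Rightarrow> cell set" where
  "Phi k j w = Dp k (w @ True # replicate j False)"

definition D2 :: "nat \<Rightarrow> cell set" where
  "D2 k = {c \<in> Dl k. fst c \<noteq> 1}"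

lemma Phi_rows:
  assumes "j \<le> k" "w \<in> Wset (2 * k - j) j"
  shows "{c \<in> Phi k j w. fst c = 1} = (\<lambda>y. (1, y)) ` {1..k - j}"
    and "{c \<in> Phi k j w. fst c \<noteq> 1} = D2 k - pc (st k) w"
    and "pc (st k) w \<subseteq> D2 k"
proof -
  note vw = valid_of_W[OF assms]
  have ok: "ok 0 w" using assms unfolding Wset_def by simp
  have ew: "endp (st k) w = (2, k - j + 1)" using endp_formula[of w "st k"] vw by (simp add: st_def)
  have r2: "c \<in> pc (st k) w \<Longrightarrow> 2 \<le> fst c" for c using pc_bound_end[of c "st k" w] ew by simp
  have "pc (st k) (w @ True # replicate j False) = pc (st k) w \<union> insert (2, k - j + 1) (pc (1, k - j + 1) (replicate j False))"
    using ew by (simp add: pc_append)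
  also have "\<dots> = pc (st k) w \<union> {(1, k - j + 1 + t) | t. t \<le> j}"
    using endp_in_pc[of "st k" w] ew pc_replicate_F by auto
  finally have P: "pc (st k) (w @ True # replicate j False) = pc (st k) w \<union> {(1, k - j + 1 + t) | t. t \<le> j}" .
  have sub: "pc (st k) w \<subseteq> Dl k" using valid_pc_Dl[OF vw(1)] P by auto
  show "pc (st k) w \<subseteq> D2 k" using sub r2 unfolding D2_def by fastforce
  show "{c \<in> Phi k j w. fst c \<noteq> 1} = D2 k - pc (st k) w"
    unfolding Phi_def Dp_def P D2_def by auto
  show "{c \<in> Phi k j w. fst c = 1} = (\<lambda>y. (1, y)) ` {1..k - j}"
  proof (intro set_eqI iffI)
    fix c :: cell assume c: "c \<in> {c \<in> Phi k j w. fst c = 1}"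
    then obtain y where y: "c = (1, y)" by (cases c) auto
    have "y \<ge> 1" "y \<le> k + 1" using c y unfolding Phi_def Dp_def Dl_def by auto
    moreover have "\<not> (k - j + 1 \<le> y)"
    proof
      assume "k - j + 1 \<le> y"
      then have "(1, y) \<in> {(1, k - j + 1 + t) | t. t \<le> j}" using \<open>y \<le> k + 1\<close> assms(1)
        by (intro CollectI exI[of _ "y - (k - j + 1)"]) auto
      then show False using c y unfolding Phi_def Dp_def P by auto
    qed
    ultimately show "c \<in> (\<lambda>y. (1, y)) ` {1..k - j}" using y by auto
  next
    fix c :: cell assume "c \<in> (\<lambda>y. (1, y)) ` {1..k - j}"
    then obtain y where y: "c = (1, y)" "1 \<le> y" "y \<le> k - j" by auto
    have "(1, y) \<notin> pc (st k) w" using r2 by fastforce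
    moreover have "(1, y) \<in> Dl k" using y unfolding Dl_def by auto
    ultimately show "c \<in> {c \<in> Phi k j w. fst c = 1}" using y unfolding Phi_def Dp_def P by auto
  qed
qed

lemma card_row1:
  assumes "j \<le> k" "w \<in> Wset (2 * k - j) j"
  shows "card {c \<in> Phi k j w. fst c = 1} = k - j"
  unfolding Phi_rows(1)[OF assms] by (subst card_image) (auto simp: inj_on_def)

lemma excited_eq: "excited (lamK k) (muK k) = Dp k ` {s. valid k s}"
  using valid_excited excited_valid by blast

lemma Ej_eq:
  assumes "j \<le> k"
  shows "{D \<in> excited (lamK k) (muK k). card {c \<in> D. fst c = 1} = k - j} = Phi k j ` Wset (2 * k - j) j"
proof (intro set_eqI iffI)
  fix D assume D: "D \<in> {D \<in> excited (lamK k) (muK k). card {c \<in> D. fst c = 1} = k - j}"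
  then obtain s where v: "valid k s" and Ds: "D = Dp k s" using excited_valid by blast
  have "True \<in> set s"
  proof (rule ccontr)
    assume "True \<notin> set s"
    then have "nT s = 0" by (induction s) auto
    then show False using v unfolding valid_def by simp
  qed
  then obtain w j' where s: "s = w @ True # replicate j' False" using split_last_True by blast
  note W = W_of_valid[OF v[unfolded s]]
  have "card {c \<in> D. fst c = 1} = k - j'" using card_row1[OF W] Ds s unfolding Phi_def by simp
  then have "j' = j" using D W(1) assms by auto
  then show "D \<in> Phi k j ` Wset (2 * k - j) j" using W Ds s unfolding Phi_def by auto
next
  fix D assume "D \<in> Phi k j ` Wset (2 * k - j) j"
  then obtain w where w: "w \<in> Wset (2 * k - j) j" and D: "D = Phi k j w" by blast
  have "D \<in> excited (lamK k) (muK k)" using valid_excited[OF valid_of_W(1)[OF assms w]] D unfolding Phi_def by simp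
  moreover have "card {c \<in> D. fst c = 1} = k - j" using card_row1[OF assms w] D by simp
  ultimately show "D \<in> {D \<in> excited (lamK k) (muK k). card {c \<in> D. fst c = 1} = k - j}" by simp
qed

lemma Phi_inj:
  assumes "j \<le> k"
  shows "inj_on (Phi k j) (Wset (2 * k - j) j)"
proof (rule inj_onI)
  fix w w' assume w: "w \<in> Wset (2 * k - j) j" and w': "w' \<in> Wset (2 * k - j) j" and eq: "Phi k j w = Phi k j w'"
  note v = valid_of_W(1)[OF assms w] and v' = valid_of_W(1)[OF assms w']
  have s1: "pc (st k) (w @ True # replicate j False) \<subseteq> Dl k" using valid_pc_Dl[OF v] .
  have s2: "pc (st k) (w' @ True # replicate j False) \<subseteq> Dl k" using valid_pc_Dl[OF v'] .
  have "pc (st k) (w @ True # replicate j False) = pc (st k) (w' @ True # replicate j False)"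
    using eq s1 s2 unfolding Phi_def Dp_def by blast
  then have "w @ True # replicate j False = w' @ True # replicate j False"
    using v v' by (intro pc_inj) (auto simp: valid_def st_def)
  then show "w = w'" by simp
qed

definition Hk :: "nat \<Rightarrow> real" where
  "Hk k = real (\<Prod>c\<in>D2 k. hook (lamK k) c)"

lemma Hk_pos: "Hk k > 0"
proof -
  have "hook (lamK k) c > 0" if "c \<in> D2 k" for c
  proof -
    obtain a b where c: "c = (a, b)" by (cases c)
    have "2 \<le> a" "1 \<le> b" "a + b \<le> k + 3" using that c unfolding D2_def Dl_def by auto
    then show ?thesis using hook_lamK c by simp
  qed
  then show ?thesis unfolding Hk_def by (simp add: prod_pos)
qed

lemma sum_formula:
  assumes "j \<le> k"
  shows "real (\<Sum>D \<in> {D \<in> excited (lamK k) (muK k). card {c \<in> D. fst c = 1} = k - j}.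
                  \<Prod>c \<in> {c \<in> D. fst c \<noteq> 1}. hook (lamK k) c) = Hk k * V (2 * k - j) j"
proof -
  have "(\<Sum>D \<in> {D \<in> excited (lamK k) (muK k). card {c \<in> D. fst c = 1} = k - j}.
                  \<Prod>c \<in> {c \<in> D. fst c \<noteq> 1}. hook (lamK k) c)
        = (\<Sum>w \<in> Wset (2 * k - j) j. \<Prod>c \<in> {c \<in> Phi k j w. fst c \<noteq> 1}. hook (lamK k) c)"
    unfolding Ej_eq[OF assms] by (rule sum.reindex[OF Phi_inj[OF assms], unfolded comp_def])
  also have "\<dots> = (\<Sum>w \<in> Wset (2 * k - j) j. \<Prod>c \<in> D2 k - pc (st k) w. hook (lamK k) c)"
  proof (intro sum.cong refl)
    fix w assume w: "w \<in> Wset (2 * k - j) j"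
    show "(\<Prod>c \<in> {c \<in> Phi k j w. fst c \<noteq> 1}. hook (lamK k) c) = (\<Prod>c \<in> D2 k - pc (st k) w. hook (lamK k) c)"
      unfolding Phi_rows(2)[OF assms w] ..
  qed
  finally have e: "real (\<Sum>D \<in> {D \<in> excited (lamK k) (muK k). card {c \<in> D. fst c = 1} = k - j}.
                  \<Prod>c \<in> {c \<in> D. fst c \<noteq> 1}. hook (lamK k) c)
        = (\<Sum>w \<in> Wset (2 * k - j) j. real (\<Prod>c \<in> D2 k - pc (st k) w. hook (lamK k) c))" by simp
  have "real (\<Prod>c \<in> D2 k - pc (st k) w. hook (lamK k) c) = Hk k * (1 / real (wp 0 w))"
    if w: "w \<in> Wset (2 * k - j) j" for w
  proof -
    have sub: "pc (st k) w \<subseteq> D2 k" using Phi_rows(3)[OF assms w] .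
    have fin: "finite (D2 k)" unfolding D2_def using finite_Dl by simp
    have "(\<Prod>c\<in>D2 k. hook (lamK k) c) = (\<Prod>c \<in> D2 k - pc (st k) w. hook (lamK k) c) * (\<Prod>c\<in>pc (st k) w. hook (lamK k) c)"
      using prod.subset_diff[OF sub fin] by simp
    moreover have "(\<Prod>c\<in>pc (st k) w. hook (lamK k) c) = wp 0 w"
      using w valid_of_W(2)[OF assms w] unfolding st_def Wset_def by (intro prod_pc) auto
    ultimately have "Hk k = real (\<Prod>c \<in> D2 k - pc (st k) w. hook (lamK k) c) * real (wp 0 w)"
      unfolding Hk_def by simp
    then show ?thesis using wp_pos[of 0 w] by (simp add: field_simps)
  qed
  then have "(\<Sum>w \<in> Wset (2 * k - j) j. real (\<Prod>c \<in> D2 k - pc (st k) w. hook (lamK k) c))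
       = (\<Sum>w \<in> Wset (2 * k - j) j. Hk k * (1 / real (wp 0 w)))" by (intro sum.cong) auto
  also have "\<dots> = Hk k * V (2 * k - j) j" unfolding V_def by (simp add: sum_distrib_left)
  finally show ?thesis using e by simp
qed


definition Iset :: "nat \<Rightarrow> nat set" where
  "Iset k = (\<lambda>i. 2 * i + 1) ` {0..k}"

lemma Iset_mem: "t \<in> Iset k \<longleftrightarrow> odd t \<and> t \<le> 2 * k + 1"
proof
  assume "t \<in> Iset k" then show "odd t \<and> t \<le> 2 * k + 1" unfolding Iset_def by auto
next
  assume a: "odd t \<and> t \<le> 2 * k + 1"
  then obtain i where "t = 2 * i + 1" by (metis oddE)
  then show "t \<in> Iset k" unfolding Iset_def using a by auto
qed

definition cf :: "nat \<Rightarrow> nat \<Rightarrow> cell" where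
  "cf k t = (k + 2 - t div 2, t - t div 2)"

lemma rim_lamK': "rim (lamK k) = {(i, j). 1 \<le> i \<and> 1 \<le> j \<and> (i + j = k + 2 \<or> (2 \<le> i \<and> i + j = k + 3))}"
  unfolding rim_lamK Dl_def Dm_def by auto

lemma rim_cf: "rim (lamK k) = cf k ` {1..2 * k + 2}"
proof (intro set_eqI iffI)
  fix c assume "c \<in> rim (lamK k)"
  then obtain i j where c: "c = (i, j)" "1 \<le> i" "1 \<le> j" "i + j = k + 2 \<or> (2 \<le> i \<and> i + j = k + 3)"
    unfolding rim_lamK' by auto
  show "c \<in> cf k ` {1..2 * k + 2}"
  proof (cases "i + j = k + 2")
    case True
    have "cf k (2 * j) = (i, j)" unfolding cf_def using True by auto
    moreover have "2 * j \<in> {1..2 * k + 2}" using True c by auto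
    ultimately show ?thesis using c by (metis image_eqI)
  next
    case False
    then have ij: "2 \<le> i" "i + j = k + 3" using c by auto
    have d: "(2 * j - 1) div 2 = j - 1" using c(3) by (cases j) auto
    have "cf k (2 * j - 1) = (i, j)" unfolding cf_def d using ij c(3) by auto
    moreover have "2 * j - 1 \<in> {1..2 * k + 2}" using ij c by auto
    ultimately show ?thesis using c by (metis image_eqI)
  qed
next
  fix c assume "c \<in> cf k ` {1..2 * k + 2}"
  then obtain t where t: "c = cf k t" "1 \<le> t" "t \<le> 2 * k + 2" by auto
  obtain m r where m: "t = 2 * m + r" "r < 2" by (metis mod_less_divisor div_mult_mod_eq mult.commute zero_less_numeral)
  show "c \<in> rim (lamK k)"
  proof (cases "r = 0")
    case True
    then have "t div 2 = m" using m by simp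
    then show ?thesis unfolding rim_lamK' t(1) cf_def using t m True by auto
  next
    case False
    then have "r = 1" using m by simp
    then have "t div 2 = m" using m by simp
    then show ?thesis unfolding rim_lamK' t(1) cf_def using t m \<open>r = 1\<close> by auto
  qed
qed

lemma cf_inj: "inj_on (cf k) {1..2 * k + 2}"
proof (rule inj_onI)
  fix t t' assume t: "t \<in> {1..2 * k + 2}" "t' \<in> {1..2 * k + 2}" "cf k t = cf k t'"
  have "t div 2 \<le> k + 1" "t' div 2 \<le> k + 1" using t by auto
  moreover have e1: "k + 2 - t div 2 = k + 2 - t' div 2" using t(3) unfolding cf_def by auto
  ultimately have "t div 2 = t' div 2" by arith
  moreover have "t - t div 2 = t' - t' div 2" using t(3) unfolding cf_def by auto
  moreover have "t div 2 \<le> t" "t' div 2 \<le> t'" by auto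
  ultimately show "t = t'" by arith
qed

lemma card_rim_lamK: "card (rim (lamK k)) = 2 * k + 2"
  unfolding rim_cf by (subst card_image[OF cf_inj]) simp

lemma ribbon_lamK: "ribbon_for (Iset k) (rim (lamK k))"
  unfolding ribbon_for_def card_rim_lamK
proof (intro exI[of _ "cf k"] conjI ballI)
  show "rim (lamK k) = cf k ` {1..2 * k + 2}" by (rule rim_cf)
next
  fix t assume t: "t \<in> {1..<2 * k + 2}"
  obtain m r where m: "t = 2 * m + r" "r < 2" by (metis mod_less_divisor div_mult_mod_eq mult.commute zero_less_numeral)
  show "cf k (Suc t) = (fst (cf k t), snd (cf k t) + 1) \<or>
        (fst (cf k t) \<ge> 1 \<and> cf k (Suc t) = (fst (cf k t) - 1, snd (cf k t)))"
  proof (cases "r = 0")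
    case True
    then show ?thesis using m t unfolding cf_def by auto
  next
    case False
    then have "r = 1" using m by simp
    then show ?thesis using m t unfolding cf_def by auto
  qed
next
  show "Iset k = {t \<in> {1..<2 * k + 2}. cf k (Suc t) = (fst (cf k t) - 1, snd (cf k t))}"
  proof (intro set_eqI iffI)
    fix t assume "t \<in> Iset k"
    then have t: "odd t" "t \<le> 2 * k + 1" using Iset_mem by auto
    then obtain m where m: "t = 2 * m + 1" by (metis oddE)
    show "t \<in> {t \<in> {1..<2 * k + 2}. cf k (Suc t) = (fst (cf k t) - 1, snd (cf k t))}"
      using t m unfolding cf_def by auto
  next
    fix t assume t: "t \<in> {t \<in> {1..<2 * k + 2}. cf k (Suc t) = (fst (cf k t) - 1, snd (cf k t))}"
    obtain m r where m: "t = 2 * m + r" "r < 2" by (metis mod_less_divisor div_mult_mod_eq mult.commute zero_less_numeral)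
    have "r \<noteq> 0"
    proof
      assume "r = 0"
      then show False using t m unfolding cf_def by auto
    qed
    then have "r = 1" using m by simp
    then show "t \<in> Iset k" using t m Iset_mem by auto
  qed
qed


lemma ar1: fixes t k :: nat shows "odd t \<Longrightarrow> t \<le> 2 * k + 1 \<Longrightarrow> min ((t + 1) div 2) (k + 1) = min (t div 2) (k + 1) + 1"
  by presburger

lemma ar2: fixes t k :: nat shows "\<not> (odd t \<and> t \<le> 2 * k + 1) \<Longrightarrow> min ((t + 1) div 2) (k + 1) = min (t div 2) (k + 1)"
  by presburger

lemma ar3: fixes t k :: nat shows "1 \<le> t \<Longrightarrow> min (t div 2) (k + 1) < t"
  by presburger

lemma rim_sub: "rim lam \<subseteq> diagram lam"
  unfolding rim_def by auto

lemma lambda_unique: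
  assumes P: "is_partition lam" and p12: "part lam 1 = part lam 2" and rb: "ribbon_for (Iset k) (rim lam)"
  shows "lam = lamK k"
proof -
  define n where "n = card (rim lam)"
  define l where "l = length lam"
  obtain c where R: "rim lam = c ` {1..n}"
    and stp: "\<forall>t\<in>{1..<n}. c (Suc t) = (fst (c t), snd (c t) + 1) \<or>
        (fst (c t) \<ge> 1 \<and> c (Suc t) = (fst (c t) - 1, snd (c t)))"
    and Ieq: "Iset k = {t \<in> {1..<n}. c (Suc t) = (fst (c t) - 1, snd (c t))}"
    using rb unfolding ribbon_for_def n_def by blast
  have "2 * k + 1 \<in> Iset k" using Iset_mem by simp
  then have n: "2 * k + 2 \<le> n" using Ieq by auto
  have upst: "c (Suc t) = (fst (c t) - 1, snd (c t))" if "1 \<le> t" "t < n" "odd t" "t \<le> 2 * k + 1" for t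
    using that Ieq Iset_mem by blast
  have rtst: "c (Suc t) = (fst (c t), snd (c t) + 1)" if "1 \<le> t" "t < n" "\<not> (odd t \<and> t \<le> 2 * k + 1)" for t
  proof -
    have "t \<notin> Iset k" using that Iset_mem by simp
    then have "c (Suc t) \<noteq> (fst (c t) - 1, snd (c t))" using Ieq that by auto
    then show ?thesis using stp that by auto
  qed
  have inR: "c t \<in> rim lam" if "1 \<le> t" "t \<le> n" for t using R that by auto
  have inD: "c t \<in> diagram lam" if "1 \<le> t" "t \<le> n" for t using inR[OF that] rim_sub by auto
  have rimP: "rim lam = {(i, j). (i, j) \<in> diagram lam \<and> (i + 1, j + 1) \<notin> diagram lam}"
    by (rule rim_partition[OF P])
  have mono: "fst (c t) \<le> fst (c 1) \<and> snd (c 1) \<le> snd (c t)" if "1 \<le> t" "t \<le> n" for t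
    using that
  proof (induction t rule: dec_induct)
    case base then show ?case by simp
  next
    case (step t)
    then show ?case using stp[rule_format, of t] by auto
  qed
  have l1: "1 \<le> l"
  proof -
    obtain i j where "(i, j) \<in> diagram lam" using inD[of 1] n by (cases "c 1") auto
    then show ?thesis unfolding l_def diagram_def by auto
  qed
  have pl: "part lam l \<ge> 1" using part_pos[OF P, of l] l1 l_def by simp
  have "(l, 1) \<in> rim lam"
    unfolding rimP using pl l1 part_zero[of lam "l + 1"] l_def by (auto simp: mem_diagram)
  then obtain t0 where t0: "1 \<le> t0" "t0 \<le> n" "c t0 = (l, 1)" using R by auto
  have c1: "c 1 = (l, 1)"
  proof -
    have "l \<le> fst (c 1)" "snd (c 1) \<le> 1" using mono[OF t0(1,2)] t0(3) by auto
    moreover obtain i j where ij: "c 1 = (i, j)" by (cases "c 1")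
    moreover have "(i, j) \<in> diagram lam" using inD[of 1] n ij by simp
    ultimately show ?thesis unfolding l_def diagram_def by auto
  qed
  have cform: "c t = (l - min (t div 2) (k + 1), t - min (t div 2) (k + 1))" if "1 \<le> t" "t \<le> n" for t
    using that
  proof (induction t rule: dec_induct)
    case base then show ?case using c1 by simp
  next
    case (step t)
    show ?case
    proof (cases "odd t \<and> t \<le> 2 * k + 1")
      case True
      have "c (Suc t) = (fst (c t) - 1, snd (c t))" using upst step True by auto
      then show ?thesis using step ar1[of t k] ar3[of t k] True by auto
    next
      case False
      have "c (Suc t) = (fst (c t), snd (c t) + 1)" using rtst step False by auto
      then show ?thesis using step ar2[of t k] ar3[of t k] False by auto
    qed
  qed
  have "(2, part lam 1 + 1) \<notin> diagram lam" using p12 by (simp add: mem_diagram)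
  then have "(1, part lam 1) \<in> rim lam"
    unfolding rimP using part_pos[OF P, of 1] l1 l_def by (auto simp: mem_diagram numeral_2_eq_2)
  then obtain t1 where t1: "1 \<le> t1" "t1 \<le> n" "c t1 = (1, part lam 1)" using R by auto
  have f1: "fst (c t1) = l - min (t1 div 2) (k + 1)" using cform[OF t1(1,2)] by simp
  have f2: "fst (c t1) = 1" using t1(3) by simp
  have "l - min (t1 div 2) (k + 1) = 1" by (simp only: f1[symmetric] f2)
  then have lle: "l \<le> k + 2" by linarith
  have "fst (c n) \<ge> 1" using inD[of n] n by (cases "c n") (auto simp: mem_diagram)
  moreover have "min (n div 2) (k + 1) = k + 1" using n by auto
  ultimately have lge: "k + 2 \<le> l" using cform[of n] n by simp
  have l: "l = k + 2" using lle lge by simp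
  have row1: "j = part lam 1" if "(1, j) \<in> rim lam" for j
    using that p12 unfolding rimP by (auto simp: mem_diagram numeral_2_eq_2)
  have nn: "n = 2 * k + 2"
  proof (rule ccontr)
    assume "n \<noteq> 2 * k + 2"
    then have "2 * k + 3 \<le> n" using n by simp
    have e1: "c (2 * k + 2) = (1, k + 1)" using cform[of "2 * k + 2"] n l by simp
    have e2: "c (2 * k + 3) = (1, k + 2)" using cform[of "2 * k + 3"] \<open>2 * k + 3 \<le> n\<close> l by simp
    have a: "(1, k + 1) \<in> rim lam" using inR[of "2 * k + 2"] n unfolding e1 by simp
    have b: "(1, k + 2) \<in> rim lam" using inR[of "2 * k + 3"] \<open>2 * k + 3 \<le> n\<close> unfolding e2 by simp
    show False using row1[OF a] row1[OF b] by simp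
  qed
  have cf2: "c t = (k + 2 - t div 2, t - t div 2)" if "1 \<le> t" "t \<le> 2 * k + 2" for t
  proof -
    have "min (t div 2) (k + 1) = t div 2" using that by auto
    then show ?thesis using cform[of t] that nn l by simp
  qed
  have partv: "part lam i = part (lamK k) i" if "1 \<le> i" "i \<le> k + 2" for i
  proof -
    have pi: "part lam i \<ge> 1" using part_pos[OF P, of i] that l l_def by simp
    have "(i, part lam i) \<in> rim lam"
      unfolding rimP using pi that part_mono[OF P, of i "i + 1"] by (auto simp: mem_diagram)
    then obtain t where t: "1 \<le> t" "t \<le> 2 * k + 2" "c t = (i, part lam i)" using R nn by auto
    have e: "i = k + 2 - t div 2" "part lam i = t - t div 2" using cf2[OF t(1,2)] t(3) by auto
    show ?thesis
    proof (cases "i = 1")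
      case True
      then have "t div 2 = k + 1" using e t by auto
      then have "t = 2 * k + 2" using t by auto
      then show ?thesis using e True by (simp add: part_lamK)
    next
      case False
      then have i2: "2 \<le> i" using that by simp
      have "t div 2 = k + 2 - i" using e t that by auto
      moreover have "t - t div 2 \<le> t div 2 + 1" by presburger
      ultimately have up: "part lam i \<le> k + 3 - i" using e(2) i2 that by linarith
      define t' where "t' = 2 * (k + 2 - i) + 1"
      have t'r: "1 \<le> t'" "t' \<le> 2 * k + 2" using i2 that unfolding t'_def by auto
      have "t' div 2 = k + 2 - i" unfolding t'_def by simp
      then have "c t' = (i, k + 3 - i)" using cf2[OF t'r] that i2 unfolding t'_def by auto
      then have "(i, k + 3 - i) \<in> diagram lam" using inD[of t'] t'r nn by auto
      then have "k + 3 - i \<le> part lam i" by (simp add: mem_diagram)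
      then show ?thesis using up i2 that by (simp add: part_lamK)
    qed
  qed
  show ?thesis
  proof (rule nth_equalityI)
    show "length lam = length (lamK k)" using l l_def by simp
  next
    fix m assume m: "m < length lam"
    have "part lam (m + 1) = part (lamK k) (m + 1)" using partv[of "m + 1"] m l l_def by simp
    then show "lam ! m = lamK k ! m" using m l l_def unfolding part_def by simp
  qed
qed

lemma lambdaI_eq: "lambdaI (Iset k) = lamK k"
  unfolding lambdaI_def
proof (rule the_equality)
  show "is_partition (lamK k) \<and> part (lamK k) 1 = part (lamK k) 2 \<and> ribbon_for (Iset k) (rim (lamK k))"
    using is_partition_lamK ribbon_lamK by (simp add: part_lamK)
next
  fix lam assume "is_partition lam \<and> part lam 1 = part lam 2 \<and> ribbon_for (Iset k) (rim lam)"
  then show "lam = lamK k" using lambda_unique by blast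
qed


theorem proposition7p1:
  fixes k :: nat
  assumes "k \<ge> 1"
  defines "I \<equiv> (\<lambda>i. 2 * i + 1) ` {0..k}"
  shows "sI I = k \<and> NN_coeff I 0 = NN_coeff I 1 \<and>
         (\<forall>j. 1 \<le> j \<and> j < k \<longrightarrow> NN_coeff I (j + 1) < NN_coeff I j)"
proof -
  have I: "I = Iset k" unfolding I_def Iset_def ..
  have L: "lambdaI I = lamK k" using lambdaI_eq I by simp
  have M: "muI I = muK k" using muI_eq[OF L] .
  have s: "sI I = k" unfolding sI_def L by (simp add: part_lamK)
  have NN: "real (NN_coeff I j) = Hk k * V (2 * k - j) j" if "j \<le> k" for j
    unfolding NN_coeff_def L M s using sum_formula[OF that] by simp
  have "V (2 * k) 0 = V (2 * k - 1) 1"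
  proof -
    have "2 * k = Suc (2 * k - 1)" using assms(1) by simp
    then show ?thesis using V_Suc_0[of "2 * k - 1"] by simp
  qed
  then have "real (NN_coeff I 0) = real (NN_coeff I 1)" using NN[of 0] NN[of 1] assms(1) by simp
  then have c01: "NN_coeff I 0 = NN_coeff I 1" by simp
  have mono: "NN_coeff I (j + 1) < NN_coeff I j" if j: "1 \<le> j" "j < k" for j
  proof -
    define L where "L = 2 * k - j - 1"
    have e1: "2 * k - (j + 1) = L" unfolding L_def by simp
    have e2: "2 * k - j = Suc L" unfolding L_def using j by simp
    have "V (Suc L) j > V L (j + 1)"
      using j unfolding L_def by (intro V_step_gt) auto
    then have "Hk k * V L (j + 1) < Hk k * V (Suc L) j"
      using Hk_pos by simp
    then have "real (NN_coeff I (j + 1)) < real (NN_coeff I j)"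
      using NN[of "j + 1"] NN[of j] j e1 e2 by simp
    then show ?thesis by simp
  qed
  show ?thesis using s c01 mono by blast
qed

end
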